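(* For every integer $n\geq 3$, there exists a set of $n$ points in $\mathbb{R}^{n-2}$ that is in crescent configuration.
   Context: A set of points in $\mathbb{R}^d$ is in general position if no $d+1$ of the points lie on a common (affine) hyperplane of $\mathbb{R}^d$ and no $d+2$ of the points lie on a common hypersphere of $\mathbb{R}^d$. A set of $n$ points in $\mathbb{R}^d$ is in crescent configuration if the points are in general position in $\mathbb{R}^d$, the Euclidean distances between the $\binom{n}{2}$ pairs of distinct points take exactly $n-1$ distinct values, and for every $1\le i\le n-1$ there is one of these distance values that is attained by exactly $i$ pairs of points. *)

theory Defs
  imports "HOL-Analysis.Analysis"
begin

text \<open>Points of R^d are elements of a Euclidean space 'a with d = DIM('a).
  An affine hyperplane is {x. a \<bullet> x = b} with a \<noteq> 0; a hypersphere is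
  sphere c r with r > 0.\<close>

definition general_position :: "'a::euclidean_space set \<Rightarrow> bool" where
  "general_position P \<longleftrightarrow>
     (\<forall>S\<subseteq>P. card S = DIM('a) + 1 \<longrightarrow>
        \<not> (\<exists>a b. a \<noteq> 0 \<and> S \<subseteq> {x. a \<bullet> x = b})) \<and>
     (\<forall>S\<subseteq>P. card S = DIM('a) + 2 \<longrightarrow>
        \<not> (\<exists>c r. r > 0 \<and> S \<subseteq> sphere c r))"

definition distances :: "'a::metric_space set \<Rightarrow> real set" where
  "distances P = {dist x y | x y. x \<in> P \<and> y \<in> P \<and> x \<noteq> y}"

definition pairs_at_distance :: "'a::metric_space set \<Rightarrow> real \<Rightarrow> 'a set set" where
  "pairs_at_distance P \<delta> = {{x, y} | x y. x \<in> P \<and> y \<in> P \<and> x \<noteq> y \<and> dist x y = \<delta>}"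

definition crescent_configuration :: "nat \<Rightarrow> 'a::euclidean_space set \<Rightarrow> bool" where
  "crescent_configuration n P \<longleftrightarrow>
     finite P \<and> card P = n \<and> general_position P \<and>
     card (distances P) = n - 1 \<and>
     (\<forall>i\<in>{1..n-1}. \<exists>\<delta>\<in>distances P. card (pairs_at_distance P \<delta>) = i)"

end

theory Submission imports Defs begin

definition ss :: "(nat \<Rightarrow> real) \<Rightarrow> nat \<Rightarrow> real" where
  "ss c j = (\<Sum>i\<in>{1..j}. (c i)^2)"

definition gg :: "(nat \<Rightarrow> real) \<Rightarrow> nat \<Rightarrow> nat \<Rightarrow> real" where
  "gg c j m = (if m < j then 0 else if m = j then sqrt (ss c j) else - c m)"

lemma split_sum:
  fixes f :: "nat \<Rightarrow> real"
  assumes "j \<le> d"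
  shows "(\<Sum>m\<in>{1..d}. f m) = (\<Sum>m\<in>{1..j}. f m) + (\<Sum>m\<in>{j<..d}. f m)"
proof -
  have "{1..d} = {1..j} \<union> {j<..d}" using assms by auto
  then show ?thesis by (simp add: sum.union_disjoint ivl_disj_int)
qed

lemma split_top:
  fixes f :: "nat \<Rightarrow> real"
  assumes "1 \<le> j"
  shows "(\<Sum>m\<in>{1..j}. f m) = (\<Sum>m\<in>{1..<j}. f m) + f j"
proof -
  have "{1..j} = insert j {1..<j}" using assms by auto
  then show ?thesis by simp
qed

lemma ss_nonneg: "ss c j \<ge> 0"
  unfolding ss_def by (simp add: sum_nonneg)

lemma ss_pos: assumes "\<And>m. c m > 0" "1 \<le> j" shows "ss c j > 0"
proof -
  have "ss c j = (\<Sum>m\<in>{1..<j}. (c m)^2) + (c j)^2" unfolding ss_def by (rule split_top[OF assms(2)])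
  moreover have "(\<Sum>m\<in>{1..<j}. (c m)^2) \<ge> 0" by (simp add: sum_nonneg)
  moreover have "(c j)^2 > 0" using assms(1)[of j] by simp
  ultimately show ?thesis by linarith
qed

lemma sumsq:
  assumes "j \<le> d"
  shows "(\<Sum>m\<in>{1..d}. (gg c j m)^2) = ss c d"
proof (cases "j = 0")
  case True
  then show ?thesis unfolding ss_def gg_def by simp
next
  case False
  have "(\<Sum>m\<in>{1..d}. (gg c j m)^2) = (\<Sum>m\<in>{1..j}. (gg c j m)^2) + (\<Sum>m\<in>{j<..d}. (gg c j m)^2)"
    by (rule split_sum[OF assms])
  also have "(\<Sum>m\<in>{1..j}. (gg c j m)^2) = (\<Sum>m\<in>{1..<j}. (gg c j m)^2) + (gg c j j)^2"
    using False by (intro split_top) simp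
  also have "(\<Sum>m\<in>{1..<j}. (gg c j m)^2) = 0" by (simp add: gg_def)
  also have "(gg c j j)^2 = ss c j" by (simp add: gg_def ss_nonneg)
  also have "(\<Sum>m\<in>{j<..d}. (gg c j m)^2) = (\<Sum>m\<in>{j<..d}. (c m)^2)"
    by (intro sum.cong) (auto simp: gg_def)
  also have "0 + ss c j + (\<Sum>m\<in>{j<..d}. (c m)^2) = ss c d"
    unfolding ss_def using split_sum[OF assms, of "\<lambda>m. (c m)^2"] by simp
  finally show ?thesis .
qed

definition ee :: "(nat \<Rightarrow> real) \<Rightarrow> nat \<Rightarrow> real" where
  "ee c k = 2 * ss c k + 2 * c k * sqrt (ss c k)"

lemma distsq:
  assumes "j < k" "k \<le> d"
  shows "(\<Sum>m\<in>{1..d}. (gg c j m - gg c k m)^2) = ee c k"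
proof -
  have k1: "1 \<le> k" using assms by simp
  have "(\<Sum>m\<in>{1..d}. (gg c j m - gg c k m)^2) = (\<Sum>m\<in>{1..k}. (gg c j m - gg c k m)^2) + (\<Sum>m\<in>{k<..d}. (gg c j m - gg c k m)^2)"
    by (rule split_sum[OF assms(2)])
  also have "(\<Sum>m\<in>{k<..d}. (gg c j m - gg c k m)^2) = 0"
    using assms by (intro sum.neutral) (auto simp: gg_def)
  also have "(\<Sum>m\<in>{1..k}. (gg c j m - gg c k m)^2) = (\<Sum>m\<in>{1..<k}. (gg c j m - gg c k m)^2) + (gg c j k - gg c k k)^2"
    by (rule split_top[OF k1])
  also have "(\<Sum>m\<in>{1..<k}. (gg c j m - gg c k m)^2) = (\<Sum>m\<in>{1..k-1}. (gg c j m)^2)"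
    using k1 by (intro sum.cong) (auto simp: gg_def)
  also have "\<dots> = ss c (k - 1)" using assms by (intro sumsq) simp
  also have "(gg c j k - gg c k k)^2 = (c k + sqrt (ss c k))^2" using assms by (simp add: gg_def power2_eq_square algebra_simps)
  finally have eq: "(\<Sum>m\<in>{1..d}. (gg c j m - gg c k m)^2) = ss c (k - 1) + (c k + sqrt (ss c k))^2" by simp
  have sk: "ss c k = ss c (k - 1) + (c k)^2"
  proof -
    have "{1..k} = insert k {1..k-1}" using k1 by auto
    then show ?thesis unfolding ss_def using k1 by (simp add: add.commute)
  qed
  have "(sqrt (ss c k))^2 = ss c k" using ss_nonneg by simp
  then show ?thesis unfolding eq ee_def using sk
    by (simp add: power2_eq_square algebra_simps)
qed

lemma lin:
  assumes "j \<le> d"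
  shows "(\<Sum>m\<in>{1..d}. A m * gg c j m) = (if j = 0 then 0 else A j * sqrt (ss c j)) - (\<Sum>m\<in>{j<..d}. c m * A m)"
proof -
  have "(\<Sum>m\<in>{1..d}. A m * gg c j m) = (\<Sum>m\<in>{1..j}. A m * gg c j m) + (\<Sum>m\<in>{j<..d}. A m * gg c j m)"
    by (rule split_sum[OF assms])
  also have "(\<Sum>m\<in>{j<..d}. A m * gg c j m) = - (\<Sum>m\<in>{j<..d}. c m * A m)"
    by (simp add: gg_def sum_negf[symmetric] mult.commute)
  also have "(\<Sum>m\<in>{1..j}. A m * gg c j m) = (if j = 0 then 0 else A j * sqrt (ss c j))"
  proof (cases "j = 0")
    case True then show ?thesis by simp
  next
    case False
    then have "(\<Sum>m\<in>{1..j}. A m * gg c j m) = (\<Sum>m\<in>{1..<j}. A m * gg c j m) + A j * gg c j j"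
      by (intro split_top) simp
    also have "(\<Sum>m\<in>{1..<j}. A m * gg c j m) = 0" by (simp add: gg_def)
    finally show ?thesis using False by (simp add: gg_def)
  qed
  finally show ?thesis by simp
qed

lemma L1:
  assumes cpos: "\<And>m. c m > 0"
    and h: "\<And>j. j \<le> d \<Longrightarrow> (\<Sum>m\<in>{1..d}. A m * gg c j m) = b"
  shows "\<And>m. 1 \<le> m \<Longrightarrow> m \<le> d \<Longrightarrow> A m = 0"
proof -
  fix m :: nat
  assume "1 \<le> m" "m \<le> d"
  then show "A m = 0"
  proof (induction m rule: less_induct)
    case (less j)
    have h0: "(\<Sum>m\<in>{1..d}. A m * gg c 0 m) = b" using h by simp
    have hj: "(\<Sum>m\<in>{1..d}. A m * gg c j m) = b" using h less by simp
    have e0: "(\<Sum>m\<in>{1..d}. A m * gg c 0 m) = - (\<Sum>m\<in>{0<..d}. c m * A m)"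
      using lin[of 0 d A c] by simp
    have ej: "(\<Sum>m\<in>{1..d}. A m * gg c j m) = A j * sqrt (ss c j) - (\<Sum>m\<in>{j<..d}. c m * A m)"
      using lin[of j d A c] less by simp
    have s01: "{0<..d} = {1..d}" by auto
    have "(\<Sum>m\<in>{0<..d}. c m * A m) = (\<Sum>m\<in>{1..j}. c m * A m) + (\<Sum>m\<in>{j<..d}. c m * A m)"
      unfolding s01 using less by (intro split_sum) simp
    also have "(\<Sum>m\<in>{1..j}. c m * A m) = (\<Sum>m\<in>{1..<j}. c m * A m) + c j * A j"
      using less by (intro split_top) simp
    also have "(\<Sum>m\<in>{1..<j}. c m * A m) = 0"
      using less by (intro sum.neutral) auto
    finally have "A j * sqrt (ss c j) = - c j * A j" using h0 hj e0 ej by simp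
    then have "A j * (sqrt (ss c j) + c j) = 0" by (simp add: algebra_simps)
    moreover have "sqrt (ss c j) + c j > 0" using cpos[of j] ss_nonneg[of c j] by (simp add: add_nonneg_pos)
    ultimately show ?case by simp
  qed
qed

lemma L2:
  assumes cpos: "\<And>m. c m > 0" and kd: "k \<le> d"
    and h: "\<And>j. j \<le> d \<Longrightarrow> j \<noteq> k \<Longrightarrow> (\<Sum>m\<in>{1..d}. A m * gg c j m) = 0"
  shows "\<And>m. 1 \<le> m \<Longrightarrow> m \<le> d \<Longrightarrow> A m = 0"
proof -
  have up: "A j = 0" if "k < j" "j \<le> d" for j
    using that
  proof (induction "d - j" arbitrary: j rule: less_induct)
    case (less j)
    have "(\<Sum>m\<in>{j<..d}. c m * A m) = 0"
      using less by (intro sum.neutral) auto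
    moreover have "(\<Sum>m\<in>{1..d}. A m * gg c j m) = 0" using h less by simp
    ultimately have "A j * sqrt (ss c j) = 0" using lin[of j d A c] less by simp
    moreover have "sqrt (ss c j) > 0" using ss_pos[OF cpos, of j] less by simp
    ultimately show ?case by simp
  qed
  have low: "A j = 0 \<and> (\<Sum>m\<in>{1..d}. c m * A m) = 0" if "1 \<le> j" "j \<le> k" for j
  proof -
    have k1: "1 \<le> k" using that by simp
    have "(\<Sum>m\<in>{1..d}. A m * gg c 0 m) = 0" using h k1 by simp
    moreover have "{0<..d} = {1..d}" by auto
    ultimately have tot: "(\<Sum>m\<in>{1..d}. c m * A m) = 0" using lin[of 0 d A c] by simp
    have lowlt: "A i = 0" if "1 \<le> i" "i < k" for i
      using that
    proof (induction i rule: less_induct)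
      case (less i)
      have "(\<Sum>m\<in>{1..d}. c m * A m) = (\<Sum>m\<in>{1..i}. c m * A m) + (\<Sum>m\<in>{i<..d}. c m * A m)"
        using less kd by (intro split_sum) simp
      also have "(\<Sum>m\<in>{1..i}. c m * A m) = (\<Sum>m\<in>{1..<i}. c m * A m) + c i * A i"
        using less by (intro split_top) simp
      also have "(\<Sum>m\<in>{1..<i}. c m * A m) = 0"
        using less by (intro sum.neutral) auto
      finally have s1: "(\<Sum>m\<in>{i<..d}. c m * A m) = - c i * A i" using tot by simp
      have "(\<Sum>m\<in>{1..d}. A m * gg c i m) = 0" using h less kd by simp
      then have "A i * sqrt (ss c i) = - c i * A i" using lin[of i d A c] less kd s1 by simp
      then have "A i * (sqrt (ss c i) + c i) = 0" by (simp add: algebra_simps)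
      moreover have "sqrt (ss c i) + c i > 0" using cpos[of i] ss_nonneg[of c i] by (simp add: add_nonneg_pos)
      ultimately show ?case by simp
    qed
    have "(\<Sum>m\<in>{1..d}. c m * A m) = (\<Sum>m\<in>{1..k}. c m * A m) + (\<Sum>m\<in>{k<..d}. c m * A m)"
      using kd by (intro split_sum) simp
    also have "(\<Sum>m\<in>{k<..d}. c m * A m) = 0" using up by (intro sum.neutral) auto
    also have "(\<Sum>m\<in>{1..k}. c m * A m) = (\<Sum>m\<in>{1..<k}. c m * A m) + c k * A k"
      using k1 by (intro split_top) simp
    also have "(\<Sum>m\<in>{1..<k}. c m * A m) = 0"
      using lowlt by (intro sum.neutral) auto
    finally have "c k * A k = 0" using tot by simp
    then have "A k = 0" using cpos[of k] by simp
    then show ?thesis using lowlt[of j] that tot by (cases "j = k") auto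
  qed
  fix m :: nat assume "1 \<le> m" "m \<le> d"
  then show "A m = 0" using up low by (cases "k < m") auto
qed

definition c0 :: "nat \<Rightarrow> nat \<Rightarrow> real" where
  "c0 d m = (if m = 1 then 2 * sqrt (real d) else 1)"

lemma c0_pos: "1 \<le> d \<Longrightarrow> c0 d m > 0"
  by (simp add: c0_def)

lemma ss_c0: assumes "1 \<le> k" shows "ss (c0 d) k = 4 * real d + real k - 1"
proof -
  have "{1..k} = insert 1 {2..k}" using assms by auto
  then have "ss (c0 d) k = (c0 d 1)^2 + (\<Sum>i\<in>{2..k}. (c0 d i)^2)" unfolding ss_def by simp
  also have "(\<Sum>i\<in>{2..k}. (c0 d i)^2) = (\<Sum>i\<in>{2..k}. 1)" by (intro sum.cong) (auto simp: c0_def)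
  also have "\<dots> = real k - 1" using assms by simp
  also have "(c0 d 1)^2 = 4 * real d" by (simp add: c0_def power_mult_distrib)
  finally show ?thesis by simp
qed

lemma ee1: "ee (c0 d) 1 = 16 * real d"
proof -
  have "sqrt (4 * real d) = 2 * sqrt (real d)" by (simp add: real_sqrt_mult)
  moreover have "sqrt (real d) * sqrt (real d) = real d" by simp
  ultimately show ?thesis unfolding ee_def using ss_c0[of 1 d] by (simp add: c0_def algebra_simps)
qed

lemma ee2: "2 \<le> k \<Longrightarrow> ee (c0 d) k = 2 * (4 * real d + real k - 1) + 2 * sqrt (4 * real d + real k - 1)"
  unfolding ee_def using ss_c0[of k d] by (simp add: c0_def)

lemma ee_big: assumes "1 \<le> d" "1 \<le> k" shows "ee (c0 d) k > ss (c0 d) d"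
proof (cases "k = 1")
  case True then show ?thesis using ee1 ss_c0[of d d] assms by simp
next
  case False
  have "sqrt (4 * real d + real k - 1) \<ge> 0" using assms by simp
  moreover have "ee (c0 d) k = 2 * (4 * real d + real k - 1) + 2 * sqrt (4 * real d + real k - 1)"
    using ee2[of k d] assms False by simp
  moreover have "real k \<ge> 1" "real d \<ge> 1" using assms by auto
  ultimately show ?thesis using ss_c0[OF assms(1), of d] assms by (smt (verit))
qed

lemma ee_lt1: assumes "2 \<le> k" "k \<le> d" shows "ee (c0 d) k < ee (c0 d) 1"
proof -
  have "0 \<le> real d * (real d * 9)" by simp
  moreover have "real k \<le> real d" using assms by simp
  moreover have "(3 * real d + 1)^2 = real d * (real d * 9) + 6 * real d + 1"
    by (simp add: power2_eq_square algebra_simps)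
  ultimately have "4 * real d + real k - 1 < (3 * real d + 1)^2" by linarith
  then have "sqrt (4 * real d + real k - 1) < sqrt ((3 * real d + 1)^2)"
    by (intro real_sqrt_less_mono)
  then have "sqrt (4 * real d + real k - 1) < 3 * real d + 1" by simp
  then show ?thesis using ee2[OF assms(1), of d] ee1[of d] assms by simp
qed

lemma ee_mono: assumes "2 \<le> j" "j < k" shows "ee (c0 d) j < ee (c0 d) k"
proof -
  have "sqrt (4 * real d + real j - 1) < sqrt (4 * real d + real k - 1)"
    using assms by (intro real_sqrt_less_mono) simp
  moreover have "real j < real k" using assms by simp
  moreover have "2 \<le> k" using assms by simp
  ultimately show ?thesis using ee2[OF assms(1), of d] ee2[of k d] by (smt (verit))
qed

lemma ee_inj: assumes "1 \<le> j" "j \<le> d" "1 \<le> k" "k \<le> d" "ee (c0 d) j = ee (c0 d) k"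
  shows "j = k"
proof (rule ccontr)
  assume ne: "j \<noteq> k"
  show False
  proof (cases "j = 1 \<or> k = 1")
    case True
    then show ?thesis using ee_lt1[of j d] ee_lt1[of k d] assms ne by auto
  next
    case False
    then show ?thesis using ee_mono[of j k d] ee_mono[of k j d] assms ne
      by (cases "j < k") auto
  qed
qed

lemma inner_idx:
  fixes idx :: "'d::finite \<Rightarrow> nat"
  assumes "bij_betw idx UNIV {1..CARD('d)}"
  shows "(\<chi> i. u (idx i)) \<bullet> ((\<chi> i. v (idx i)) :: real^'d) = (\<Sum>m\<in>{1..CARD('d)}. u m * v m)"
proof -
  have "(\<chi> i. u (idx i)) \<bullet> ((\<chi> i. v (idx i)) :: real^'d) = (\<Sum>i\<in>UNIV. u (idx i) * v (idx i))"
    by (simp add: inner_vec_def)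
  also have "\<dots> = (\<Sum>m\<in>{1..CARD('d)}. u m * v m)"
    using sum.reindex_bij_betw[OF assms, of "\<lambda>m. u m * v m"] by simp
  finally show ?thesis .
qed

theorem theorem1p1:
  fixes n :: nat
  assumes "n \<ge> 3" and "CARD('d::finite) = n - 2"
  shows "\<exists>P :: (real ^ 'd) set. crescent_configuration n P"
proof -
  define d where "d = CARD('d)"
  have d1: "1 \<le> d" and nd: "n = d + 2" using assms unfolding d_def by auto
  obtain idx :: "'d \<Rightarrow> nat" where bij: "bij_betw idx UNIV {1..d}"
    using finite_same_card_bij[of "UNIV :: 'd set" "{1..d}"] unfolding d_def by auto
  have bij': "bij_betw idx UNIV {1..CARD('d)}" using bij unfolding d_def .
  define c where "c = c0 d"
  have cpos: "\<And>m. c m > 0" unfolding c_def using c0_pos[OF d1] by simp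
  define Q :: "nat \<Rightarrow> real^'d" where "Q j = (\<chi> i. gg c j (idx i))" for j
  define \<rho> where "\<rho> = sqrt (ss c d)"
  have inn: "Q j \<bullet> Q k = (\<Sum>m\<in>{1..d}. gg c j m * gg c k m)" for j k
    unfolding Q_def d_def by (rule inner_idx[OF bij'])
  have normQ: "norm (Q j) = \<rho>" if "j \<le> d" for j
  proof -
    have "Q j \<bullet> Q j = (\<Sum>m\<in>{1..d}. (gg c j m)^2)" unfolding inn by (simp add: power2_eq_square)
    also have "\<dots> = ss c d" by (rule sumsq[OF that])
    finally show ?thesis unfolding \<rho>_def norm_eq_sqrt_inner by simp
  qed
  have distlt: "dist (Q j) (Q k) = sqrt (ee c k)" if "j < k" "k \<le> d" for j k
  proof -
    have "Q j - Q k = (\<chi> i. (\<lambda>m. gg c j m - gg c k m) (idx i))"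
      unfolding Q_def by (simp add: vec_eq_iff)
    then have "(Q j - Q k) \<bullet> (Q j - Q k) = (\<Sum>m\<in>{1..d}. (gg c j m - gg c k m) * (gg c j m - gg c k m))"
      unfolding d_def using inner_idx[OF bij'] by simp
    also have "\<dots> = ee c k" using distsq[OF that, of c] by (simp add: power2_eq_square)
    finally show ?thesis by (simp add: dist_norm norm_eq_sqrt_inner)
  qed
  have distQ: "dist (Q j) (Q k) = sqrt (ee c (max j k))" if "j \<le> d" "k \<le> d" "j \<noteq> k" for j k
  proof (cases "j < k")
    case True then show ?thesis using distlt that by (simp add: max_def)
  next
    case False then have "k < j" using that by simp
    then show ?thesis using distlt[of k j] that by (simp add: dist_commute max_def)
  qed
  have dist0: "dist 0 (Q j) = \<rho>" "dist (Q j) 0 = \<rho>" if "j \<le> d" for j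
    using normQ[OF that] by (auto simp: dist_norm)
  have rhopos: "\<rho> > 0" unfolding \<rho>_def using ss_pos[OF cpos d1] by simp
  have eebig: "sqrt (ee c k) > \<rho>" if "1 \<le> k" for k
    unfolding \<rho>_def c_def using ee_big[OF d1 that] by (simp add: real_sqrt_less_mono)
  have eeinj: "j = k" if "1 \<le> j" "j \<le> d" "1 \<le> k" "k \<le> d" "sqrt (ee c j) = sqrt (ee c k)" for j k
  proof -
    have "ee c j > 0" "ee c k > 0" using eebig[of j] eebig[of k] rhopos that
      by (smt (verit) real_sqrt_le_0_iff)+
    then have "ee c j = ee c k" using that(5) by simp
    then show ?thesis using ee_inj[OF that(1-4)] unfolding c_def by simp
  qed
  have Qne: "Q j \<noteq> Q k" if "j \<le> d" "k \<le> d" "j \<noteq> k" for j k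
  proof
    assume "Q j = Q k"
    then have "dist (Q j) (Q k) = 0" by simp
    moreover have "max j k \<ge> 1" using that by auto
    ultimately show False using distQ[OF that] eebig[of "max j k"] rhopos by simp
  qed
  have Q0: "Q j \<noteq> 0" if "j \<le> d" for j
    using dist0[OF that] rhopos by auto
  define P where "P = insert 0 (Q ` {..d})"
  have injQ: "inj_on Q {..d}" using Qne by (auto simp: inj_on_def)
  have finP: "finite P" unfolding P_def by simp
  have cardP: "card P = d + 2"
  proof -
    have "0 \<notin> Q ` {..d}" using Q0 by auto
    then show ?thesis unfolding P_def using card_image[OF injQ] by simp
  qed
  have distP: "dist x y = \<rho> \<or> (\<exists>j k. j < k \<and> k \<le> d \<and> {x, y} = {Q j, Q k} \<and> dist x y = sqrt (ee c k))"
    if xyP: "x \<in> P" "y \<in> P" "x \<noteq> y" for x y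
  proof -
    consider "x = 0" "y \<in> Q ` {..d}" | "y = 0" "x \<in> Q ` {..d}" | "x \<in> Q ` {..d}" "y \<in> Q ` {..d}"
      using xyP unfolding P_def by auto
    then show ?thesis
    proof cases
      case 1 then show ?thesis using dist0 by auto
    next
      case 2 then show ?thesis using dist0 by auto
    next
      case 3
      then obtain j k where jk: "j \<le> d" "k \<le> d" "x = Q j" "y = Q k" by auto
      then have "j \<noteq> k" using xyP by auto
      then consider "j < k" | "k < j" by linarith
      then show ?thesis
      proof cases
        case 1 then show ?thesis using distlt jk by auto
      next
        case 2 then show ?thesis using distlt[of k j] jk by (auto simp: dist_commute insert_commute)
      qed
    qed
  qed
  have distances_eq: "distances P = insert \<rho> ((\<lambda>k. sqrt (ee c k)) ` {1..d})"
  proof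
    show "distances P \<subseteq> insert \<rho> ((\<lambda>k. sqrt (ee c k)) ` {1..d})"
    proof
      fix t assume "t \<in> distances P"
      then obtain x y where xy: "x \<in> P" "y \<in> P" "x \<noteq> y" "t = dist x y" unfolding distances_def by auto
      show "t \<in> insert \<rho> ((\<lambda>k. sqrt (ee c k)) ` {1..d})"
        using distP[OF xy(1-3)] xy(4) by force
    qed
  next
    show "insert \<rho> ((\<lambda>k. sqrt (ee c k)) ` {1..d}) \<subseteq> distances P"
    proof
      fix t assume "t \<in> insert \<rho> ((\<lambda>k. sqrt (ee c k)) ` {1..d})"
      then consider "t = \<rho>" | k where "1 \<le> k" "k \<le> d" "t = sqrt (ee c k)" by auto
      then show "t \<in> distances P"
      proof cases
        case 1
        have "0 \<in> P" "Q 0 \<in> P" "(0::real^'d) \<noteq> Q 0" using Q0[of 0] unfolding P_def by auto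
        then show ?thesis unfolding distances_def using 1 dist0[of 0] by force
      next
        case 2
        have "Q 0 \<in> P" "Q k \<in> P" "Q 0 \<noteq> Q k" using Qne[of 0 k] 2 unfolding P_def by auto
        moreover have "dist (Q 0) (Q k) = t" using distlt[of 0 k] 2 by simp
        ultimately show ?thesis unfolding distances_def by force
      qed
    qed
  qed
  have card_dist: "card (distances P) = d + 1"
  proof -
    have inj: "inj_on (\<lambda>k. sqrt (ee c k)) {1..d}" using eeinj by (auto simp: inj_on_def)
    have "\<rho> \<notin> (\<lambda>k. sqrt (ee c k)) ` {1..d}" using eebig by force
    then show ?thesis unfolding distances_eq using card_image[OF inj] by simp
  qed
  have pairs_k: "card (pairs_at_distance P (sqrt (ee c k))) = k" if k: "1 \<le> k" "k \<le> d" for k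
  proof -
    have eq: "pairs_at_distance P (sqrt (ee c k)) = (\<lambda>j. {Q j, Q k}) ` {..<k}"
    proof
      show "pairs_at_distance P (sqrt (ee c k)) \<subseteq> (\<lambda>j. {Q j, Q k}) ` {..<k}"
      proof
        fix e assume "e \<in> pairs_at_distance P (sqrt (ee c k))"
        then obtain x y where xy: "x \<in> P" "y \<in> P" "x \<noteq> y" "dist x y = sqrt (ee c k)" "e = {x, y}"
          unfolding pairs_at_distance_def by auto
        from distP[OF xy(1-3)] show "e \<in> (\<lambda>j. {Q j, Q k}) ` {..<k}"
        proof
          assume "dist x y = \<rho>" then show ?thesis using xy eebig[OF k(1)] by simp
        next
          assume "\<exists>j k'. j < k' \<and> k' \<le> d \<and> {x, y} = {Q j, Q k'} \<and> dist x y = sqrt (ee c k')"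
          then obtain j k' where jk: "j < k'" "k' \<le> d" "{x, y} = {Q j, Q k'}" "dist x y = sqrt (ee c k')" by auto
          have "k' = k" using eeinj[of k' k] jk xy k by simp
          then show ?thesis using jk xy by auto
        qed
      qed
    next
      show "(\<lambda>j. {Q j, Q k}) ` {..<k} \<subseteq> pairs_at_distance P (sqrt (ee c k))"
      proof
        fix e assume "e \<in> (\<lambda>j. {Q j, Q k}) ` {..<k}"
        then obtain j where j: "j < k" "e = {Q j, Q k}" by auto
        have "Q j \<in> P" "Q k \<in> P" "Q j \<noteq> Q k" "dist (Q j) (Q k) = sqrt (ee c k)"
          using j k Qne[of j k] distlt[of j k] unfolding P_def by auto
        then show "e \<in> pairs_at_distance P (sqrt (ee c k))"
          unfolding pairs_at_distance_def using j by blast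
      qed
    qed
    have "inj_on (\<lambda>j. {Q j, Q k}) {..<k}"
    proof (rule inj_onI)
      fix i j assume ij: "i \<in> {..<k}" "j \<in> {..<k}" "{Q i, Q k} = {Q j, Q k}"
      have "Q i \<noteq> Q k" "Q j \<noteq> Q k" using ij k Qne by auto
      then have "Q i = Q j" using ij(3) by (auto simp: doubleton_eq_iff)
      then show "i = j" using ij k Qne[of i j] by fastforce
    qed
    then show ?thesis unfolding eq using card_image by fastforce
  qed
  have pairs_rho: "card (pairs_at_distance P \<rho>) = d + 1"
  proof -
    have eq: "pairs_at_distance P \<rho> = (\<lambda>j. {0, Q j}) ` {..d}"
    proof
      show "pairs_at_distance P \<rho> \<subseteq> (\<lambda>j. {0, Q j}) ` {..d}"
      proof
        fix e assume "e \<in> pairs_at_distance P \<rho>"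
        then obtain x y where xy: "x \<in> P" "y \<in> P" "x \<noteq> y" "dist x y = \<rho>" "e = {x, y}"
          unfolding pairs_at_distance_def by auto
        consider "x = 0" "y \<in> Q ` {..d}" | "y = 0" "x \<in> Q ` {..d}" | "x \<in> Q ` {..d}" "y \<in> Q ` {..d}"
          using xy(1-3) unfolding P_def by auto
        then show "e \<in> (\<lambda>j. {0, Q j}) ` {..d}"
        proof cases
          case 1 then show ?thesis using xy by auto
        next
          case 2 then show ?thesis using xy by (auto simp: insert_commute)
        next
          case 3
          then obtain j k where jk: "j \<le> d" "k \<le> d" "x = Q j" "y = Q k" by auto
          then have "j \<noteq> k" using xy by auto
          then have "dist x y = sqrt (ee c (max j k))" using distQ jk by simp
          moreover have "max j k \<ge> 1" using \<open>j \<noteq> k\<close> by auto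
          ultimately show ?thesis using eebig[of "max j k"] xy by simp
        qed
      qed
    next
      show "(\<lambda>j. {0, Q j}) ` {..d} \<subseteq> pairs_at_distance P \<rho>"
      proof
        fix e assume "e \<in> (\<lambda>j. {0, Q j}) ` {..d}"
        then obtain j where j: "j \<le> d" "e = {0, Q j}" by auto
        have "0 \<in> P" "Q j \<in> P" "0 \<noteq> Q j" "dist 0 (Q j) = \<rho>"
          using j Q0[of j] dist0[of j] unfolding P_def by auto
        then show "e \<in> pairs_at_distance P \<rho>"
          unfolding pairs_at_distance_def using j by blast
      qed
    qed
    have "inj_on (\<lambda>j. {0, Q j}) {..d}"
    proof (rule inj_onI)
      fix i j assume ij: "i \<in> {..d}" "j \<in> {..d}" "{0, Q i} = {0, Q j}"
      have "Q i \<noteq> 0" "Q j \<noteq> 0" using ij Q0 by auto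
      then have "Q i = Q j" using ij(3) by (auto simp: doubleton_eq_iff)
      then show "i = j" using ij Qne[of i j] by fastforce
    qed
    then show ?thesis unfolding eq using card_image by fastforce
  qed
  define iv where "iv = inv_into UNIV idx"
  have innA: "a \<bullet> Q j = (\<Sum>m\<in>{1..d}. a $ iv m * gg c j m)" for a j
  proof -
    have "a = (\<chi> i. (\<lambda>m. a $ iv m) (idx i))"
      unfolding iv_def using bij_betw_imp_inj_on[OF bij] by (simp add: vec_eq_iff)
    then have "a \<bullet> Q j = (\<chi> i. (\<lambda>m. a $ iv m) (idx i)) \<bullet> Q j" by simp
    also have "\<dots> = (\<Sum>m\<in>{1..d}. a $ iv m * gg c j m)"
      unfolding Q_def d_def by (rule inner_idx[OF bij'])
    finally show ?thesis .
  qed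
  have zero: "a = 0" if "\<And>m. 1 \<le> m \<Longrightarrow> m \<le> d \<Longrightarrow> a $ iv m = 0" for a :: "real^'d"
  proof -
    have "a $ i = 0" for i
    proof -
      have "idx i \<in> {1..d}" using bij by (auto simp: bij_betw_def)
      moreover have "iv (idx i) = i" unfolding iv_def using bij_betw_imp_inj_on[OF bij] by simp
      ultimately show ?thesis using that[of "idx i"] by auto
    qed
    then show ?thesis by (simp add: vec_eq_iff)
  qed
  have hypL1: "a = 0" if "\<And>j. j \<le> d \<Longrightarrow> a \<bullet> Q j = b" for a :: "real^'d" and b
  proof (rule zero)
    fix m assume "1 \<le> m" "m \<le> d"
    then show "a $ iv m = 0"
      using L1[where c=c and d=d and A="\<lambda>m. a $ iv m" and b=b, OF cpos] that innA by simp
  qed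
  have hypL2: "a = 0" if "k \<le> d" "\<And>j. j \<le> d \<Longrightarrow> j \<noteq> k \<Longrightarrow> a \<bullet> Q j = 0" for a :: "real^'d" and k
  proof (rule zero)
    fix m assume "1 \<le> m" "m \<le> d"
    then show "a $ iv m = 0"
      using L2[where c=c and A="\<lambda>m. a $ iv m", OF cpos that(1)] that innA by simp
  qed
  have gp: "general_position P"
    unfolding general_position_def
  proof (intro conjI allI impI notI)
    fix S assume SP: "S \<subseteq> P" and cS: "card S = DIM(real^'d) + 1"
      and ex: "\<exists>a b. a \<noteq> 0 \<and> S \<subseteq> {x. a \<bullet> x = b}"
    then obtain a b where ab: "a \<noteq> 0" "S \<subseteq> {x. a \<bullet> x = b}" by auto
    have cS': "card S = d + 1" using cS unfolding d_def by simp
    have "\<not> P \<subseteq> S" using card_mono[OF finite_subset[OF SP finP]] cS' cardP by (metis add_le_cancel_left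
      le_refl nat_le_linear numeral_le_one_iff semiring_norm(69) card_mono[OF finite_subset[OF SP finP]]) 
    then obtain p where p: "p \<in> P" "p \<notin> S" by auto
    have "S = P - {p}"
    proof (rule card_subset_eq)
      show "finite (P - {p})" using finP by simp
      show "S \<subseteq> P - {p}" using SP p by auto
      show "card S = card (P - {p})" using cS' cardP p finP by simp
    qed
    then have onH: "\<And>x. x \<in> P \<Longrightarrow> x \<noteq> p \<Longrightarrow> a \<bullet> x = b" using ab by auto
    show False
    proof (cases "p = 0")
      case True
      have "a = 0" by (rule hypL1[of a b]) (use onH Q0 True in \<open>auto simp: P_def\<close>)
      then show False using ab by simp
    next
      case False
      then obtain k where k: "k \<le> d" "p = Q k" using p unfolding P_def by auto
      have "a \<bullet> 0 = b" using onH[of 0] False unfolding P_def by auto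
      then have b0: "b = 0" by simp
      have "a = 0"
      proof (rule hypL2[OF k(1)])
        fix j assume "j \<le> d" "j \<noteq> k"
        then show "a \<bullet> Q j = 0" using onH[of "Q j"] Qne[of j k] k b0 unfolding P_def by auto
      qed
      then show False using ab by simp
    qed
  next
    fix S assume SP: "S \<subseteq> P" and cS: "card S = DIM(real^'d) + 2"
      and ex: "\<exists>c r. r > 0 \<and> S \<subseteq> sphere c r"
    then obtain z r where zr: "r > 0" "S \<subseteq> sphere z r" by auto
    have "S = P" using card_subset_eq[OF finP SP] cS cardP unfolding d_def by simp
    then have onS: "\<And>x. x \<in> P \<Longrightarrow> dist z x = r" using zr by auto
    have nz: "norm z = r" using onS[of 0] unfolding P_def by simp
    have "z = 0"
    proof (rule hypL1[of z "\<rho>^2 / 2"])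
      fix j assume j: "j \<le> d"
      have "dist z (Q j) = r" using onS[of "Q j"] j unfolding P_def by auto
      then have "norm (z - Q j)^2 = r^2" by (simp add: dist_norm)
      moreover have "norm (z - Q j)^2 = norm z ^2 - 2 * (z \<bullet> Q j) + norm (Q j)^2"
        by (simp add: power2_norm_eq_inner inner_diff inner_commute algebra_simps)
      ultimately show "z \<bullet> Q j = \<rho>^2 / 2" using nz normQ[OF j] by simp
    qed
    then show False using nz zr by simp
  qed
  have "crescent_configuration n P"
    unfolding crescent_configuration_def
  proof (intro conjI)
    show "finite P" by (rule finP)
    show "card P = n" using cardP nd by simp
    show "general_position P" by (rule gp)
    show "card (distances P) = n - 1" using card_dist nd by simp
    show "\<forall>i\<in>{1..n - 1}. \<exists>\<delta>\<in>distances P. card (pairs_at_distance P \<delta>) = i"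
    proof
      fix i assume i: "i \<in> {1..n - 1}"
      show "\<exists>\<delta>\<in>distances P. card (pairs_at_distance P \<delta>) = i"
      proof (cases "i \<le> d")
        case True
        then show ?thesis using pairs_k[of i] i unfolding distances_eq by auto
      next
        case False
        then have "i = d + 1" using i nd by simp
        then show ?thesis using pairs_rho unfolding distances_eq by auto
      qed
    qed
  qed
  then show ?thesis by blast
qed

end
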